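(* Let $(X,\Sigma,\mu)$ be a measure space, $n\ge1$, $\mathbb{F}\in\{\mathbb{R},\mathbb{C}\}$, and $T:L^2(X,\mu;\mathbb{F}^n)\to\mathbb{F}$ a non-zero linear form. Suppose $\dim L^2(X,\mu;\mathbb{F})\ge n$. Then for every $d\in\mathbb{F}\setminus\{0\}$, the set $\mathcal{F}^{\mathbb{F}}_{(X,\mu),n}\cap T^{-1}(\{d\})$ is dense in $T^{-1}(\{d\})$ (for the norm of $L^2(X,\mu;\mathbb{F}^n)$).
   Context: A family $\Phi=(\varphi_x)_{x\in X}$ in $\mathbb{F}^n$ (with measurable coordinates) is a continuous frame indexed by $(X,\mu)$ if there are $0<A\le B$ with $A\|v\|^2\le\int_X|\langle v,\varphi_x\rangle|^2d\mu(x)\le B\|v\|^2$ for all $v\in\mathbb{F}^n$. $\mathcal{F}^{\mathbb{F}}_{(X,\mu),n}$ denotes the set of such frames, viewed as a subset of $L^2(X,\mu;\mathbb{F}^n)$ (equivalently, the elements of $L^2(X,\mu;\mathbb{F}^n)$ whose coordinate functions are linearly independent in $L^2(X,\mu;\mathbb{F})$). *)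

theory Defs
  imports "HOL-Analysis.Analysis"
begin

text \<open>Elements of L^2 are handled through representatives; everything that lives on
  L^2 (linear forms) is required to respect equality mu-almost everywhere.\<close>
definition L2 :: "'a measure \<Rightarrow> ('a \<Rightarrow> 'v::real_normed_vector) set" where
  "L2 M = {f. f \<in> borel_measurable M \<and> integrable M (\<lambda>x. (norm (f x))^2)}"

definition L2norm :: "'a measure \<Rightarrow> ('a \<Rightarrow> 'v::real_normed_vector) \<Rightarrow> real" where
  "L2norm M f = sqrt (\<integral>x. (norm (f x))^2 \<partial>M)"

text \<open>Standard inner product on F^n, w.r.t. a conjugation cj (identity for R, cnj for C).\<close>
definition inner_cj :: "('F::real_normed_field \<Rightarrow> 'F) \<Rightarrow> 'F^'n::finite \<Rightarrow> 'F^'n \<Rightarrow> 'F" where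
  "inner_cj cj v w = (\<Sum>i\<in>UNIV. v$i * cj (w$i))"

definition linear_form_L2 :: "'a measure \<Rightarrow> (('a \<Rightarrow> 'F::real_normed_field^'n::finite) \<Rightarrow> 'F) \<Rightarrow> bool" where
  "linear_form_L2 M T \<longleftrightarrow>
     (\<forall>f\<in>L2 M. \<forall>g\<in>L2 M. T (\<lambda>x. f x + g x) = T f + T g) \<and>
     (\<forall>c. \<forall>f\<in>L2 M. T (\<lambda>x. c *s f x) = c * T f) \<and>
     (\<forall>f\<in>L2 M. \<forall>g\<in>L2 M. (AE x in M. f x = g x) \<longrightarrow> T f = T g)"

text \<open>dim L^2(X,mu;F) >= n: there are n elements of L^2 that are linearly
  independent (as classes modulo a.e. equality).\<close>
definition L2_dim_ge :: "'a measure \<Rightarrow> 'F::real_normed_field itself \<Rightarrow> nat \<Rightarrow> bool" where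
  "L2_dim_ge M _ n \<longleftrightarrow>
     (\<exists>g :: nat \<Rightarrow> 'a \<Rightarrow> 'F. (\<forall>i<n. g i \<in> L2 M) \<and>
        (\<forall>c. (AE x in M. (\<Sum>i<n. c i * g i x) = 0) \<longrightarrow> (\<forall>i<n. c i = 0)))"

definition cframe :: "('F::real_normed_field \<Rightarrow> 'F) \<Rightarrow> 'a measure \<Rightarrow> ('a \<Rightarrow> 'F^'n::finite) \<Rightarrow> bool" where
  "cframe cj M \<Phi> \<longleftrightarrow> \<Phi> \<in> borel_measurable M \<and>
     (\<exists>A B. 0 < A \<and> A \<le> B \<and>
       (\<forall>v. ennreal (A * (norm v)^2) \<le> (\<integral>\<^sup>+ x. ennreal ((norm (inner_cj cj v (\<Phi> x)))^2) \<partial>M) \<and>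
            (\<integral>\<^sup>+ x. ennreal ((norm (inner_cj cj v (\<Phi> x)))^2) \<partial>M) \<le> ennreal (B * (norm v)^2)))"

end

theory Submission
  imports Defs
begin

lemma vec_meas_iff:
  fixes f :: "'a \<Rightarrow> 'F::euclidean_space^'n::finite"
  shows "f \<in> borel_measurable M \<longleftrightarrow> (\<forall>i. (\<lambda>x. f x $ i) \<in> borel_measurable M)"
proof
  assume f: "f \<in> borel_measurable M"
  show "\<forall>i. (\<lambda>x. f x $ i) \<in> borel_measurable M"
  proof
    fix i
    have "continuous_on UNIV (\<lambda>v::'F^'n. v $ i)"
      by (simp add: linear_continuous_on bounded_linear_vec_nth)
    then show "(\<lambda>x. f x $ i) \<in> borel_measurable M"
      using measurable_compose[OF f borel_measurable_continuous_onI] by simp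
  qed
next
  assume A: "\<forall>i. (\<lambda>x. f x $ i) \<in> borel_measurable M"
  show "f \<in> borel_measurable M"
    unfolding borel_measurable_euclidean_space[of f]
    using A by (auto simp: Basis_vec_def inner_axis intro!: borel_measurable_inner)
qed

lemma norm_smult_vec: "norm ((c::'F::real_normed_field) *s (v::'F^'n::finite)) = norm c * norm v"
  unfolding norm_vec_def
  by (simp add: L2_set_right_distrib[symmetric] norm_mult vector_scalar_mult_def)


lemma sq_sum_le: "norm (a + b)^2 \<le> 2 * norm a ^2 + 2 * norm (b::'v::real_normed_vector)^2"
proof -
  have "norm (a+b)^2 \<le> (norm a + norm b)^2"
    by (simp add: norm_triangle_ineq power_mono)
  also have "\<dots> \<le> 2 * norm a ^2 + 2 * norm b^2"
  proof -
    have h: "0 \<le> (norm a - norm b)^2" by simp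
    show ?thesis by (smt (verit) h power2_diff power2_sum)
  qed
  finally show ?thesis .
qed

lemma sq_diff_le: "norm (a - b)^2 \<le> 2 * norm a ^2 + 2 * norm (b::'v::real_normed_vector)^2"
  using sq_sum_le[of a "-b"] by simp

lemma vec_nth_meas[measurable (raw)]:
  fixes f :: "'a \<Rightarrow> 'F::euclidean_space^'n::finite"
  shows "f \<in> borel_measurable M \<Longrightarrow> (\<lambda>x. f x $ i) \<in> borel_measurable M"
  using vec_meas_iff by blast

lemma L2_add:
  fixes f g :: "'a \<Rightarrow> 'v::euclidean_space"
  assumes "f \<in> L2 M" "g \<in> L2 M"
  shows "(\<lambda>x. f x + g x) \<in> L2 M"
proof -
  have i: "integrable M (\<lambda>x. 2 * norm (f x)^2 + 2 * norm (g x)^2)"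
    using assms by (auto simp: L2_def)
  show ?thesis
    using assms unfolding L2_def
    by (auto intro!: Bochner_Integration.integrable_bound[OF i] simp: sq_sum_le)
qed

lemma L2_smult:
  fixes f :: "'a \<Rightarrow> 'F::{real_normed_field,euclidean_space}^'n::finite"
  assumes "f \<in> L2 M"
  shows "(\<lambda>x. c *s f x) \<in> L2 M"
proof -
  have m: "f \<in> borel_measurable M" using assms by (simp add: L2_def)
  have "(\<lambda>x. c *s f x) \<in> borel_measurable M"
    unfolding vec_meas_iff vector_smult_component using m by (intro allI) measurable
  moreover have "integrable M (\<lambda>x. norm c ^2 * norm (f x)^2)"
    using assms by (auto simp: L2_def)
  ultimately show ?thesis
    by (simp add: L2_def norm_smult_vec power_mult_distrib)
qed

lemma L2_vec:
  fixes gg :: "'n::finite \<Rightarrow> 'a \<Rightarrow> 'F::{real_normed_field,euclidean_space}"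
  assumes "\<And>i. gg i \<in> L2 M"
  shows "(\<lambda>x. \<chi> i. gg i x) \<in> L2 M"
proof -
  have "(\<lambda>x. \<chi> i. gg i x) \<in> borel_measurable M"
    using assms unfolding vec_meas_iff by (simp add: L2_def)
  moreover have "integrable M (\<lambda>x. \<Sum>i\<in>UNIV. norm (gg i x)^2)"
    using assms by (auto simp: L2_def)
  moreover have "norm (\<chi> i. gg i x)^2 = (\<Sum>i\<in>UNIV. norm (gg i x)^2)" for x
    by (simp add: norm_vec_def L2_set_def sum_nonneg)
  ultimately show ?thesis
    by (simp add: L2_def)
qed

lemma L2_meas: "f \<in> L2 M \<Longrightarrow> f \<in> borel_measurable M" by (simp add: L2_def)
lemma L2_int: "f \<in> L2 M \<Longrightarrow> integrable M (\<lambda>x. norm (f x)^2)" by (simp add: L2_def)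

locale cjf =
  fixes cj :: "'F::{real_normed_field,euclidean_space} \<Rightarrow> 'F"
  assumes cj_add: "\<And>a b. cj (a + b) = cj a + cj b"
    and cj_mult: "\<And>a b. cj (a * b) = cj a * cj b"
    and cj_cj: "\<And>a. cj (cj a) = a"
    and cj_norm: "\<And>a. norm (cj a) = norm a"
    and cj_sq: "\<And>a. a * cj a = of_real (norm a ^ 2)"
    and cj_cont: "continuous_on UNIV cj"
    and cj_of_real: "\<And>r. cj (of_real r) = of_real r"
begin

lemma cj_0[simp]: "cj 0 = 0"
  using cj_add[of 0 0] by simp

lemma cj_eq0[simp]: "cj a = 0 \<longleftrightarrow> a = 0"
  by (metis cj_0 cj_cj)

lemma cj_sum: "cj (sum f S) = (\<Sum>x\<in>S. cj (f x))"
  by (induct S rule: infinite_finite_induct) (auto simp: cj_add)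

lemma cj_meas[measurable (raw)]:
  "f \<in> borel_measurable M \<Longrightarrow> (\<lambda>x. cj (f x)) \<in> borel_measurable M"
  using measurable_compose[OF _ borel_measurable_continuous_onI[OF cj_cont]] by blast

lemma continuous_on_cj[continuous_intros]:
  "continuous_on S g \<Longrightarrow> continuous_on S (\<lambda>x. cj (g x))"
  by (rule continuous_on_compose2[OF cj_cont]) auto

lemma CS: "norm (inner_cj cj v w) \<le> norm v * norm (w::'F^'n::finite)"
proof -
  have "norm (inner_cj cj v w) \<le> (\<Sum>i\<in>UNIV. norm (v$i) * norm (w$i))"
    unfolding inner_cj_def
    by (rule order_trans[OF norm_sum]) (simp add: norm_mult cj_norm)
  also have "\<dots> = (\<Sum>i\<in>UNIV. \<bar>norm (v$i)\<bar> * \<bar>norm (w$i)\<bar>)" by simp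
  also have "\<dots> \<le> norm v * norm w"
    unfolding norm_vec_def by (rule L2_set_mult_ineq)
  finally show ?thesis .
qed

lemma inner_meas[measurable (raw)]:
  "\<Phi> \<in> borel_measurable M \<Longrightarrow> (\<lambda>x. inner_cj cj v (\<Phi> x :: 'F^'n::finite)) \<in> borel_measurable M"
  unfolding inner_cj_def using vec_meas_iff[of \<Phi> M] by measurable

lemma inner_cj_zero_iff:
  "inner_cj cj v w = 0 \<longleftrightarrow> (\<Sum>i\<in>UNIV. cj (v$i) * w$i) = 0"
proof -
  have "cj (inner_cj cj v w) = (\<Sum>i\<in>UNIV. cj (v$i) * w$i)"
    by (simp add: inner_cj_def cj_sum cj_mult cj_cj)
  then show ?thesis by (metis cj_eq0)
qed

lemma inner_cj_smult: "inner_cj cj v (c *s w) = cj c * inner_cj cj v w"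
  by (simp add: inner_cj_def sum_distrib_left cj_mult vector_scalar_mult_def algebra_simps)

lemma inner_cj_scaleR: "inner_cj cj (r *\<^sub>R v) w = of_real r * inner_cj cj v w"
proof -
  have "(r *\<^sub>R v) $ i = of_real r * v $ i" for i
    by (simp add: scaleR_conv_of_real[symmetric])
  then show ?thesis by (simp add: inner_cj_def sum_distrib_left algebra_simps)
qed

end


context cjf begin

lemma prod_int:
  fixes \<Phi> :: "'a \<Rightarrow> 'F^'n::finite"
  assumes "\<Phi> \<in> L2 M"
  shows "integrable M (\<lambda>x. cj (\<Phi> x $ i) * \<Phi> x $ j)"
proof (rule Bochner_Integration.integrable_bound[OF L2_int[OF assms]])
  show "(\<lambda>x. cj (\<Phi> x $ i) * \<Phi> x $ j) \<in> borel_measurable M"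
    using L2_meas[OF assms] by measurable
  show "AE x in M. norm (cj (\<Phi> x $ i) * \<Phi> x $ j) \<le> norm ((norm (\<Phi> x))\<^sup>2)"
  proof (intro AE_I2)
    fix x
    have "norm (cj (\<Phi> x $ i) * \<Phi> x $ j) = norm (\<Phi> x $ i) * norm (\<Phi> x $ j)"
      by (simp add: norm_mult cj_norm)
    also have "\<dots> \<le> norm (\<Phi> x) * norm (\<Phi> x)"
      using Finite_Cartesian_Product.norm_nth_le[of "\<Phi> x" i] Finite_Cartesian_Product.norm_nth_le[of "\<Phi> x" j] by (simp add: mult_mono)
    finally show "norm (cj (\<Phi> x $ i) * \<Phi> x $ j) \<le> norm ((norm (\<Phi> x))\<^sup>2)"
      by (simp add: power2_eq_square)
  qed
qed

lemma q_int:
  fixes \<Phi> :: "'a \<Rightarrow> 'F^'n::finite"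
  assumes "\<Phi> \<in> L2 M"
  shows "integrable M (\<lambda>x. norm (inner_cj cj v (\<Phi> x))^2)"
proof (rule Bochner_Integration.integrable_bound)
  show "integrable M (\<lambda>x. norm v ^2 * norm (\<Phi> x)^2)"
    using L2_int[OF assms] by simp
  show "(\<lambda>x. norm (inner_cj cj v (\<Phi> x))^2) \<in> borel_measurable M"
    using L2_meas[OF assms] by measurable
  show "AE x in M. norm (norm (inner_cj cj v (\<Phi> x))^2) \<le> norm (norm v ^2 * norm (\<Phi> x)^2)"
    by (intro AE_I2) (simp add: power_mult_distrib[symmetric] power_mono CS)
qed

lemma q_formula:
  fixes \<Phi> :: "'a \<Rightarrow> 'F^'n::finite"
  assumes "\<Phi> \<in> L2 M"
  shows "(\<integral>x. norm (inner_cj cj v (\<Phi> x))^2 \<partial>M) =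
     norm (\<Sum>i\<in>UNIV. \<Sum>j\<in>UNIV. (v$i * cj (v$j)) * (\<integral>x. cj (\<Phi> x $ i) * \<Phi> x $ j \<partial>M))"
proof -
  let ?q = "\<integral>x. norm (inner_cj cj v (\<Phi> x))^2 \<partial>M"
  have pw: "(of_real (norm (inner_cj cj v (\<Phi> x))^2) :: 'F) =
      (\<Sum>i\<in>UNIV. \<Sum>j\<in>UNIV. (v$i * cj (v$j)) * (cj (\<Phi> x $ i) * \<Phi> x $ j))" for x
    unfolding cj_sq[symmetric]
    apply (simp add: inner_cj_def cj_sum cj_mult cj_cj sum_distrib_left sum_distrib_right algebra_simps)
    apply (subst sum.swap)
    apply (simp add: algebra_simps)
    done
  have "(of_real ?q :: 'F) = (\<integral>x. of_real (norm (inner_cj cj v (\<Phi> x))^2) \<partial>M)"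
    by (rule integral_of_real[symmetric, OF q_int[OF assms]])
  also have "\<dots> = (\<integral>x. (\<Sum>i\<in>UNIV. \<Sum>j\<in>UNIV. (v$i * cj (v$j)) * (cj (\<Phi> x $ i) * \<Phi> x $ j)) \<partial>M)"
    by (simp only: pw)
  also have "\<dots> = (\<Sum>i\<in>UNIV. \<Sum>j\<in>UNIV. (v$i * cj (v$j)) * (\<integral>x. cj (\<Phi> x $ i) * \<Phi> x $ j \<partial>M))"
    using prod_int[OF assms] by (simp add: integral_sum integrable_sum)
  finally have e: "(of_real ?q :: 'F) = \<dots>" .
  have "?q \<ge> 0" by (rule integral_nonneg_AE) simp
  then have "?q = norm (of_real ?q :: 'F)" by simp
  then show ?thesis using e by simp
qed


lemma frame_lemma:
  fixes \<Phi> :: "'a \<Rightarrow> 'F^'n::finite"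
  assumes L: "\<Phi> \<in> L2 M"
    and nd: "\<And>v. (AE x in M. inner_cj cj v (\<Phi> x) = 0) \<Longrightarrow> v = 0"
  shows "cframe cj M \<Phi>"
proof -
  define q where "q v = (\<integral>x. norm (inner_cj cj v (\<Phi> x))^2 \<partial>M)" for v
  define N where "N = (\<integral>x. norm (\<Phi> x)^2 \<partial>M)"
  have qnn: "q v \<ge> 0" for v unfolding q_def by (rule integral_nonneg_AE) simp
  have nn: "(\<integral>\<^sup>+ x. ennreal ((norm (inner_cj cj v (\<Phi> x)))^2) \<partial>M) = ennreal (q v)" for v
    unfolding q_def by (rule nn_integral_eq_integral[OF q_int[OF L]]) simp
  have up: "q v \<le> N * norm v ^2" for v
  proof -
    have "q v \<le> (\<integral>x. norm v ^2 * norm (\<Phi> x)^2 \<partial>M)"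
      unfolding q_def
    proof (rule integral_mono[OF q_int[OF L]])
      show "integrable M (\<lambda>x. norm v ^2 * norm (\<Phi> x)^2)" using L2_int[OF L] by simp
    qed (simp add: power_mult_distrib[symmetric] power_mono CS)
    also have "\<dots> = N * norm v ^2" by (simp add: N_def)
    finally show ?thesis .
  qed
  have qcont: "continuous_on UNIV q"
  proof -
    have "q = (\<lambda>v. norm (\<Sum>i\<in>UNIV. \<Sum>j\<in>UNIV. (v$i * cj (v$j)) * (\<integral>x. cj (\<Phi> x $ i) * \<Phi> x $ j \<partial>M)))"
      unfolding q_def by (rule ext) (rule q_formula[OF L])
    moreover have "continuous_on UNIV (\<lambda>v::'F^'n. norm (\<Sum>i\<in>UNIV. \<Sum>j\<in>UNIV. (v$i * cj (v$j)) * (\<integral>x. cj (\<Phi> x $ i) * \<Phi> x $ j \<partial>M)))"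
      by (intro continuous_intros continuous_on_cj linear_continuous_on bounded_linear_vec_nth)
    ultimately show ?thesis by simp
  qed
  have hom: "q (r *\<^sub>R v) = r^2 * q v" for r v
    unfolding q_def by (simp add: inner_cj_scaleR norm_mult power_mult_distrib)
  obtain b :: "'F^'n" where b: "b \<in> sphere 0 1"
    using nonempty_Basis norm_Basis by fastforce
  obtain v0 where v0: "v0 \<in> sphere 0 1" and v0min: "\<And>y. y \<in> sphere 0 1 \<Longrightarrow> q v0 \<le> q y"
    using continuous_attains_inf[OF compact_sphere, of 0 1 q] qcont b
    by (metis continuous_on_subset empty_iff subset_UNIV)
  define A where "A = q v0"
  have Apos: "A > 0"
  proof (rule ccontr)
    assume "\<not> A > 0"
    then have "q v0 = 0" using qnn[of v0] by (simp add: A_def)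
    then have "AE x in M. norm (inner_cj cj v0 (\<Phi> x))^2 = 0"
      unfolding q_def by (subst (asm) integral_nonneg_eq_0_iff_AE[OF q_int[OF L]]) auto
    then have "AE x in M. inner_cj cj v0 (\<Phi> x) = 0" by simp
    then have "v0 = 0" by (rule nd)
    then show False using v0 by simp
  qed
  have low: "A * norm v ^2 \<le> q v" for v
  proof (cases "v = 0")
    case True
    then show ?thesis by (simp add: q_def inner_cj_def)
  next
    case False
    define w where "w = (1 / norm v) *\<^sub>R v"
    have w: "w \<in> sphere 0 1" using False by (simp add: w_def)
    have "v = norm v *\<^sub>R w" using False by (simp add: w_def)
    then have "q v = norm v ^2 * q w" using hom by metis
    then show ?thesis using v0min[OF w] by (simp add: A_def mult.commute mult_right_mono)
  qed
  define B where "B = max A N"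
  have L1: "ennreal (A * norm v ^2) \<le> (\<integral>\<^sup>+ x. ennreal ((norm (inner_cj cj v (\<Phi> x)))^2) \<partial>M)" for v
    unfolding nn using low by (simp add: ennreal_leI)
  have L3: "(\<integral>\<^sup>+ x. ennreal ((norm (inner_cj cj v (\<Phi> x)))^2) \<partial>M) \<le> ennreal (B * norm v ^2)" for v
  proof -
    have "q v \<le> B * norm v ^2"
      using up[of v] by (smt (verit) B_def max.cobounded2 mult_right_mono zero_le_power2)
    then show ?thesis unfolding nn by (simp add: ennreal_leI)
  qed
  have "A \<le> B" by (simp add: B_def)
  then show ?thesis
    unfolding cframe_def using L2_meas[OF L] Apos L1 L3 by blast
qed

end

lemma lin_sum:
  fixes u :: "'s \<Rightarrow> 'F::field^'n::finite"
  shows "(\<Sum>i\<in>UNIV. (\<Sum>s\<in>S. c s *s u s)$i * h i) = (\<Sum>s\<in>S. c s * (\<Sum>i\<in>UNIV. u s $ i * h i))"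
proof -
  have "(\<Sum>i\<in>UNIV. (\<Sum>s\<in>S. c s *s u s)$i * h i) = (\<Sum>i\<in>UNIV. \<Sum>s\<in>S. c s * (u s $ i * h i))"
    by (simp add: sum_distrib_right sum_distrib_left mult.left_commute mult.commute)
  also have "\<dots> = (\<Sum>s\<in>S. \<Sum>i\<in>UNIV. c s * (u s $ i * h i))"
    by (rule sum.swap)
  also have "\<dots> = (\<Sum>s\<in>S. c s * (\<Sum>i\<in>UNIV. u s $ i * h i))"
    by (simp add: sum_distrib_left)
  finally show ?thesis .
qed

lemma bad_finite:
  fixes f G :: "'a \<Rightarrow> 'F::field^'n::finite"
  assumes Qinj: "\<And>u. (AE x in M. (\<Sum>i\<in>UNIV. u$i * G x $ i) = 0) \<Longrightarrow> u = 0"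
  shows "finite {t. \<exists>u. u \<noteq> 0 \<and> (AE x in M. (\<Sum>i\<in>UNIV. u$i * (f x $ i + t * G x $ i)) = 0)}"
    (is "finite ?Bad")
proof -
  define P where "P w x = (\<Sum>i\<in>UNIV. w$i * f x $ i)" for w x
  define Q where "Q w x = (\<Sum>i\<in>UNIV. w$i * G x $ i)" for w x
  define u where "u t = (SOME u. u \<noteq> 0 \<and> (AE x in M. (\<Sum>i\<in>UNIV. u$i * (f x $ i + t * G x $ i)) = 0))" for t
  have uB: "u t \<noteq> 0 \<and> (AE x in M. P (u t) x + t * Q (u t) x = 0)" if "t \<in> ?Bad" for t
  proof -
    have "u t \<noteq> 0 \<and> (AE x in M. (\<Sum>i\<in>UNIV. u t $i * (f x $ i + t * G x $ i)) = 0)"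
      using that unfolding u_def mem_Collect_eq by (rule someI_ex)
    moreover have "(\<Sum>i\<in>UNIV. w$i * (f x $ i + t * G x $ i)) = P w x + t * Q w x" for w x
      by (simp add: P_def Q_def distrib_left sum.distrib sum_distrib_left mult.left_commute)
    ultimately show ?thesis by simp
  qed
  have claim: "finite S \<Longrightarrow> S \<subseteq> ?Bad \<Longrightarrow> \<forall>c. (\<Sum>s\<in>S. c s *s u s) = 0 \<longrightarrow> (\<forall>s\<in>S. c s = 0)" for S
  proof (induction S rule: finite_induct)
    case empty
    then show ?case by simp
  next
    case (insert a S)
    show ?case
    proof (intro allI impI)
      fix c
      assume w0: "(\<Sum>s\<in>insert a S. c s *s u s) = 0"
      have AEall: "AE x in M. \<forall>s\<in>insert a S. P (u s) x + s * Q (u s) x = 0"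
      proof (rule AE_finite_allI)
        show "finite (insert a S)" using insert.hyps(1) by simp
        fix s assume "s \<in> insert a S"
        then have sB: "s \<in> ?Bad" by (rule subsetD[OF insert.prems])
        show "AE x in M. P (u s) x + s * Q (u s) x = 0" using uB[OF sB] by (rule conjunct2)
      qed
      have "AE x in M. Q (\<Sum>s\<in>S. (c s * (a - s)) *s u s) x = 0"
        using AEall
      proof (rule AE_mp, intro AE_I2 impI)
        fix x assume H: "\<forall>s\<in>insert a S. P (u s) x + s * Q (u s) x = 0"
        have "0 = P (\<Sum>s\<in>insert a S. c s *s u s) x + a * Q (\<Sum>s\<in>insert a S. c s *s u s) x"
          by (simp add: w0 P_def Q_def)
        also have "\<dots> = (\<Sum>s\<in>insert a S. c s * (P (u s) x + a * Q (u s) x))"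
          unfolding P_def Q_def lin_sum by (simp add: distrib_left sum.distrib sum_distrib_left mult.left_commute)
        also have "\<dots> = (\<Sum>s\<in>insert a S. c s * ((a - s) * Q (u s) x))"
        proof (rule sum.cong[OF refl])
          fix s assume "s \<in> insert a S"
          then have "P (u s) x + s * Q (u s) x = 0" using H by (rule bspec[rotated])
          then have "P (u s) x = - (s * Q (u s) x)" by (simp add: eq_neg_iff_add_eq_0)
          then show "c s * (P (u s) x + a * Q (u s) x) = c s * ((a - s) * Q (u s) x)"
            by (simp add: algebra_simps)
        qed
        also have "\<dots> = (\<Sum>s\<in>S. c s * ((a - s) * Q (u s) x))"
          using insert.hyps by simp
        also have "\<dots> = Q (\<Sum>s\<in>S. (c s * (a - s)) *s u s) x"
          unfolding Q_def lin_sum by (simp add: mult.assoc)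
        finally show "Q (\<Sum>s\<in>S. (c s * (a - s)) *s u s) x = 0" by simp
      qed
      then have "(\<Sum>s\<in>S. (c s * (a - s)) *s u s) = 0"
        using Qinj unfolding Q_def by blast
      then have cS: "\<forall>s\<in>S. c s * (a - s) = 0"
        using spec[OF insert.IH[OF conjunct2[OF insert_subset[THEN iffD1, OF insert.prems]]], of "\<lambda>s. c s * (a - s)"] by blast
      then have cS': "\<forall>s\<in>S. c s = 0" using insert.hyps(2) by fastforce
      then have "c a *s u a = 0" using w0 insert.hyps by simp
      moreover have "u a \<noteq> 0" using uB[OF conjunct1[OF insert_subset[THEN iffD1, OF insert.prems]]] by (rule conjunct1)
      ultimately have "c a = 0" by simp
      then show "\<forall>s\<in>insert a S. c s = 0" using cS' by simp
    qed
  qed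
  have bound: "card S \<le> CARD('n)" if S: "S \<subseteq> ?Bad" "finite S" for S
  proof -
    have cl: "\<forall>c. (\<Sum>s\<in>S. c s *s u s) = 0 \<longrightarrow> (\<forall>s\<in>S. c s = 0)" using claim[OF S(2) S(1)] .
    have inj: "inj_on u S"
    proof (rule inj_onI, rule ccontr)
      fix s t assume st: "s \<in> S" "t \<in> S" "u s = u t" "s \<noteq> t"
      define c where "c x = (if x = s then 1 else 0) - (if x = t then 1 else (0::'F))" for x
      have "(\<Sum>x\<in>S. c x *s u x) = (\<Sum>x\<in>S. (if x = s then u x else 0)) - (\<Sum>x\<in>S. (if x = t then u x else 0))"
      proof -
        have "c x *s u x = (if x = s then u x else 0) - (if x = t then u x else 0)" for x
          using st(4) by (cases "x = s"; cases "x = t") (auto simp: c_def)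
        then show ?thesis by (simp add: sum_subtractf[symmetric])
      qed
      also have "\<dots> = 0" using st S by (simp add: sum.delta)
      finally have "c s = 0" using cl st by blast
      then show False using st by (simp add: c_def)
    qed
    have "vec.independent (u ` S)"
      unfolding vec.independent_explicit
    proof (intro conjI allI impI ballI)
      show "finite (u ` S)" using S by simp
      fix c v assume "(\<Sum>v\<in>u ` S. c v *s v) = 0" "v \<in> u ` S"
      then show "c v = 0" using cl by (auto simp: sum.reindex[OF inj])
    qed
    then have "card (u ` S) \<le> vec.dim (u ` S)" using vec.independent_bound_general by blast
    also have "\<dots> \<le> CARD('n)" by (rule dim_subset_UNIV_cart_gen)
    finally show ?thesis using card_image[OF inj] by simp
  qed
  show ?thesis using finite_if_finite_subsets_card_bdd[of ?Bad "CARD('n)"] bound by blast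
qed


theorem (in cjf) main:
  fixes T :: "('a \<Rightarrow> 'F^'n::finite) \<Rightarrow> 'F" and f :: "'a \<Rightarrow> 'F^'n"
  assumes lin: "linear_form_L2 M T" and dim: "L2_dim_ge M TYPE('F) CARD('n)"
    and d: "d \<noteq> 0" and fL: "f \<in> L2 M" and Tf: "T f = d" and e: "e > 0"
  shows "\<exists>g\<in>L2 M. cframe cj M g \<and> T g = d \<and> L2norm M (\<lambda>x. f x - g x) < e"
proof -
  obtain gg :: "nat \<Rightarrow> 'a \<Rightarrow> 'F" where ggL: "\<forall>i<CARD('n). gg i \<in> L2 M"
    and ggI: "\<forall>c. (AE x in M. (\<Sum>i<CARD('n). c i * gg i x) = 0) \<longrightarrow> (\<forall>i<CARD('n). c i = 0)"
    using dim unfolding L2_dim_ge_def by blast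
  obtain h :: "'n \<Rightarrow> nat" where h: "bij_betw h UNIV {0..<CARD('n)}"
    using ex_bij_betw_finite_nat[of "UNIV::'n set"] by auto
  have hlt: "h i < CARD('n)" for i using h by (auto simp: bij_betw_def)
  have hinj: "inj h" using h by (simp add: bij_betw_def)
  define G where "G = (\<lambda>x. \<chi> i. gg (h i) x)"
  have GL: "G \<in> L2 M" unfolding G_def by (rule L2_vec) (use ggL hlt in blast)
  have Qinj: "u = 0" if A: "AE x in M. (\<Sum>i\<in>UNIV. u$i * G x $ i) = 0" for u
  proof -
    define c where "c k = u $ (inv_into UNIV h k)" for k
    have eq: "(\<Sum>k<CARD('n). c k * gg k x) = (\<Sum>i\<in>UNIV. u$i * G x $ i)" for x
    proof -
      have "(\<Sum>k<CARD('n). c k * gg k x) = (\<Sum>k\<in>{0..<CARD('n)}. c k * gg k x)"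
        by (simp add: atLeast0LessThan)
      also have "\<dots> = (\<Sum>i\<in>UNIV. c (h i) * gg (h i) x)"
        by (rule sum.reindex_bij_betw[OF h, symmetric])
      also have "\<dots> = (\<Sum>i\<in>UNIV. u$i * G x $ i)"
        by (simp add: c_def G_def inv_into_f_f[OF hinj] inv_f_f[OF hinj])
      finally show ?thesis .
    qed
    have "\<forall>k<CARD('n). c k = 0" using ggI A unfolding eq[symmetric] by blast
    then have "c (h i) = 0" for i using hlt[of i] by blast
    then have "u $ i = 0" for i by (simp add: c_def inv_into_f_f[OF hinj] inv_f_f[OF hinj])
    then show ?thesis by (simp add: vec_eq_iff)
  qed
  define Bad where "Bad = {t. \<exists>u. u \<noteq> 0 \<and> (AE x in M. (\<Sum>i\<in>UNIV. u$i * (f x $ i + t * G x $ i)) = 0)}"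
  have fB: "finite Bad" unfolding Bad_def by (rule bad_finite) (rule Qinj)
  define TG where "TG = T G"
  have fZ: "finite {t. d + t * TG = 0}"
  proof (rule finite_subset)
    show "{t. d + t * TG = 0} \<subseteq> {- d / TG}"
    proof
      fix t assume "t \<in> {t. d + t * TG = 0}"
      then have tt: "d + t * TG = 0" by simp
      then have "TG \<noteq> 0" using d by auto
      moreover have "t * TG = - d" using tt by (simp add: eq_neg_iff_add_eq_0 add.commute)
      ultimately have "t = - d / TG" by (metis nonzero_mult_div_cancel_right)
      then show "t \<in> {- d / TG}" by simp
    qed
  qed simp
  define B2 where "B2 = Bad \<union> {t. d + t * TG = 0}"
  have fB2: "finite B2" using fB fZ by (simp add: B2_def)
  define cc where "cc s = d / (d + of_real s * TG)" for s :: real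
  define Nf where "Nf = (\<integral>x. norm (f x)^2 \<partial>M)"
  define NG where "NG = (\<integral>x. norm (G x)^2 \<partial>M)"
  define R where "R s = 2 * norm (1 - cc s)^2 * Nf + 2 * norm (cc s * of_real s)^2 * NG" for s :: real
  have "(R \<longlongrightarrow> R 0) (at_right 0)"
    unfolding R_def cc_def by (intro tendsto_intros) (auto simp: d)
  moreover have "R 0 = 0" by (simp add: R_def cc_def d)
  ultimately have "eventually (\<lambda>s. R s < e^2) (at_right 0)"
    using e by (auto intro: order_tendstoD(2))
  then obtain \<delta> where \<delta>: "\<delta> > 0" "\<And>s. 0 < s \<Longrightarrow> s < \<delta> \<Longrightarrow> R s < e^2"
    by (auto simp: eventually_at_right_field)
  have "\<not> (of_real ` {0<..<\<delta>} \<subseteq> B2)"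
  proof
    assume "of_real ` {0<..<\<delta>} \<subseteq> B2"
    then have "finite ((of_real :: real \<Rightarrow> 'F) ` {0<..<\<delta>})" using fB2 finite_subset by blast
    moreover have "inj_on (of_real :: real \<Rightarrow> 'F) {0<..<\<delta>}" by (auto simp: inj_on_def)
    ultimately have "finite {0<..<\<delta>}" using finite_imageD by blast
    then show False using \<delta>(1) infinite_Ioo by blast
  qed
  then obtain s where s0: "s \<in> {0<..<\<delta>}" and s3: "of_real s \<notin> B2" by blast
  then have s: "0 < s" "s < \<delta>" "of_real s \<notin> B2" by auto
  define t where "t = (of_real s :: 'F)"
  define c where "c = cc s"
  have den: "d + t * TG \<noteq> 0" using s(3) by (simp add: B2_def t_def)
  have tB: "t \<notin> Bad" using s(3) by (simp add: B2_def t_def)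
  have c0: "c \<noteq> 0" using d den by (simp add: c_def cc_def t_def)
  define \<Phi> where "\<Phi> = (\<lambda>x. f x + t *s G x)"
  define g where "g = (\<lambda>x. c *s \<Phi> x)"
  have tGL: "(\<lambda>x. t *s G x) \<in> L2 M" by (rule L2_smult[OF GL])
  have \<Phi>L: "\<Phi> \<in> L2 M" unfolding \<Phi>_def by (rule L2_add[OF fL tGL])
  have gL: "g \<in> L2 M" unfolding g_def by (rule L2_smult[OF \<Phi>L])
  have l1: "\<forall>f\<in>L2 M. \<forall>g\<in>L2 M. T (\<lambda>x. f x + g x) = T f + T g"
    and l2: "\<forall>c. \<forall>f\<in>L2 M. T (\<lambda>x. c *s f x) = c * T f"
    using lin unfolding linear_form_L2_def by blast+
  have "T g = c * T \<Phi>" unfolding g_def using bspec[OF spec[OF l2, of c] \<Phi>L] by simp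
  also have "T \<Phi> = T f + T (\<lambda>x. t *s G x)" unfolding \<Phi>_def using bspec[OF bspec[OF l1 fL] tGL] by simp
  also have "T (\<lambda>x. t *s G x) = t * TG" unfolding TG_def using bspec[OF spec[OF l2, of t] GL] by simp
  finally have Tg: "T g = d" using den by (simp add: Tf c_def cc_def t_def)
  have fr: "cframe cj M g"
  proof (rule frame_lemma[OF gL])
    fix v assume A: "AE x in M. inner_cj cj v (g x) = 0"
    have "AE x in M. (\<Sum>i\<in>UNIV. (\<chi> i. cj (v$i))$i * (f x $ i + t * G x $ i)) = 0"
      using A
    proof (rule AE_mp, intro AE_I2 impI)
      fix x assume "inner_cj cj v (g x) = 0"
      then have "inner_cj cj v (\<Phi> x) = 0" using c0 by (simp add: g_def inner_cj_smult)
      then show "(\<Sum>i\<in>UNIV. (\<chi> i. cj (v$i))$i * (f x $ i + t * G x $ i)) = 0"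
        by (simp add: inner_cj_zero_iff \<Phi>_def)
    qed
    then have "(\<chi> i. cj (v$i)) = 0" using tB unfolding Bad_def by blast
    then show "v = 0" by (simp add: vec_eq_iff)
  qed
  have pw: "norm (f x - g x)^2 \<le> 2 * norm (1 - c)^2 * norm (f x)^2 + 2 * norm (c * t)^2 * norm (G x)^2" for x
  proof -
    have eq: "f x - g x = (1 - c) *s f x - (c * t) *s G x"
      by (simp add: g_def \<Phi>_def vec_eq_iff algebra_simps)
    have "norm (f x - g x)^2 \<le> 2 * norm ((1 - c) *s f x)^2 + 2 * norm ((c * t) *s G x)^2"
      unfolding eq by (rule sq_diff_le)
    then show ?thesis by (simp only: norm_smult_vec power_mult_distrib mult.assoc)
  qed
  have ir: "integrable M (\<lambda>x. 2 * norm (1 - c)^2 * norm (f x)^2 + 2 * norm (c * t)^2 * norm (G x)^2)"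
    using L2_int[OF fL] L2_int[OF GL] by simp
  have il: "integrable M (\<lambda>x. norm (f x - g x)^2)"
  proof (rule Bochner_Integration.integrable_bound[OF ir])
    show "(\<lambda>x. norm (f x - g x)^2) \<in> borel_measurable M"
      using L2_meas[OF fL] L2_meas[OF gL] by measurable
    show "AE x in M. norm (norm (f x - g x)^2) \<le> norm (2 * norm (1 - c)^2 * norm (f x)^2 + 2 * norm (c * t)^2 * norm (G x)^2)"
      using pw by (intro AE_I2) (simp add: abs_of_nonneg)
  qed
  have "(\<integral>x. norm (f x - g x)^2 \<partial>M) \<le> (\<integral>x. 2 * norm (1 - c)^2 * norm (f x)^2 + 2 * norm (c * t)^2 * norm (G x)^2 \<partial>M)"
    by (rule integral_mono[OF il ir pw])
  also have "\<dots> = R s"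
    using L2_int[OF fL] L2_int[OF GL] by (simp add: R_def Nf_def NG_def c_def t_def)
  also have "\<dots> < e^2" using \<delta>(2) s by blast
  finally have "(\<integral>x. norm (f x - g x)^2 \<partial>M) < e^2" .
  then have "L2norm M (\<lambda>x. f x - g x) < e"
    unfolding L2norm_def using e by (intro real_less_lsqrt) (auto intro: integral_nonneg_AE)
  then show ?thesis using gL fr Tg by blast
qed


interpretation rcj: cjf "(\<lambda>x::real. x)"
  by unfold_locales (auto simp: power2_eq_square continuous_on_id)

interpretation ccj: cjf cnj
  by unfold_locales (auto simp: complex_norm_square[symmetric] continuous_on_cnj continuous_on_id)

theorem corollary6p1:
  fixes M :: "'a measure"
  shows "(\<forall>(T :: ('a \<Rightarrow> real^'n::finite) \<Rightarrow> real) (d :: real).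
            linear_form_L2 M T \<and> (\<exists>f\<in>L2 M. T f \<noteq> 0) \<and>
            L2_dim_ge M TYPE(real) CARD('n) \<and> d \<noteq> 0 \<longrightarrow>
            (\<forall>f\<in>L2 M. T f = d \<longrightarrow>
               (\<forall>e>0. \<exists>g\<in>L2 M. cframe (\<lambda>x. x) M g \<and> T g = d \<and>
                  L2norm M (\<lambda>x. f x - g x) < e)))
       \<and> (\<forall>(T :: ('a \<Rightarrow> complex^'n) \<Rightarrow> complex) (d :: complex).
            linear_form_L2 M T \<and> (\<exists>f\<in>L2 M. T f \<noteq> 0) \<and>
            L2_dim_ge M TYPE(complex) CARD('n) \<and> d \<noteq> 0 \<longrightarrow>
            (\<forall>f\<in>L2 M. T f = d \<longrightarrow>
               (\<forall>e>0. \<exists>g\<in>L2 M. cframe cnj M g \<and> T g = d \<and>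
                  L2norm M (\<lambda>x. f x - g x) < e)))"
  using rcj.main ccj.main by blast

end
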